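(* Let $p$ be a prime, $n=n_1n_2$, $d$ a divisor of $n$ with $1<d<n$, $Q=p^n$, $m\ge0$ an integer and $N=n_1(m+1)$. Let $h\in\mathbb{Z}[y]$ be monic of degree $n_1$, and let $f\in\mathbb{Z}[y][x]$ be monic in $x$ of degree $\deg_x f$, with $\deg_y f\le n_1-1$. Then there is a constant $K>0$ depending only on $n_1$, $m$, $\deg_x f$ and $\|h\|_\infty$ such that every $P\in\mathbb{Z}[x,y]$ with $\deg_xP\le m$, $\deg_yP\le n_1-1$ and $\|P\|_\infty\le 2^{(N-1)/4}p^{(n-d)/N}$ satisfies $$\bigl|\mathrm{Res}_y\bigl(\mathrm{Res}_x(P,f),h\bigr)\bigr|\le K\,Q^{(1-\frac dn)\frac{\deg_x f}{m+1}}\,\|f\|_\infty^{\,n_1 m}.$$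
   Context: $\mathrm{Res}_x$ (resp. $\mathrm{Res}_y$) denotes the resultant with respect to the variable $x$ (resp. $y$); the quantity $\mathrm{Res}_y(\mathrm{Res}_x(P,f),h)$ is called the pseudonorm of $P$. For a polynomial with integer coefficients (in one or several variables), $\|\cdot\|_\infty$ is the maximum absolute value of its coefficients. *)

theory Defs
  imports Complex_Main "Subresultants.Resultant_Prelim"
begin

text \<open>Bivariate integer polynomials in x, y are represented as \<open>int poly poly\<close>:
  polynomials in x whose coefficients are polynomials in y.
  \<open>resultant\<close> (from the AFP Subresultants entry) is the Sylvester resultant.\<close>

definition norm_inf1 :: "int poly \<Rightarrow> int" where
  "norm_inf1 h = (MAX j \<in> {..degree h}. \<bar>coeff h j\<bar>)"

definition norm_inf2 :: "int poly poly \<Rightarrow> int" where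
  "norm_inf2 P = (MAX i \<in> {..degree P}. norm_inf1 (coeff P i))"

definition degree_y :: "int poly poly \<Rightarrow> nat" where
  "degree_y P = (MAX i \<in> {..degree P}. degree (coeff P i))"

end

theory Submission imports Defs
begin

lemma N_sum_le:
  assumes N0': "N 0 = 0" and Nadd: "\<And>x y. N (x+y) \<le> (N x + N y :: real)"
  shows "finite S \<Longrightarrow> N (sum f S) \<le> (\<Sum>i\<in>S. N (f i))"
  by (induction S rule: finite_induct) (auto simp: N0' intro: order.trans[OF Nadd])

lemma N_prod_le:
  assumes N0: "\<And>x. N x \<ge> (0::real)" and N1: "N 1 \<le> 1" and Nmult: "\<And>x y. N (x*y) \<le> N x * N y"
  shows "finite S \<Longrightarrow> N (prod f S) \<le> (\<Prod>i\<in>S. N (f i))"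
proof (induction S rule: finite_induct)
  case empty then show ?case using N1 by simp
next
  case (insert x F)
  have "N (prod f (insert x F)) = N (f x * prod f F)" using insert by simp
  also have "\<dots> \<le> N (f x) * N (prod f F)" by (rule Nmult)
  also have "\<dots> \<le> N (f x) * (\<Prod>i\<in>F. N (f i))" using insert N0 by (simp add: mult_left_mono)
  finally show ?case using insert by simp
qed

lemma det_bound:
  fixes A :: "'a::comm_ring_1 mat" and N :: "'a \<Rightarrow> real"
  assumes A: "A \<in> carrier_mat k k"
  and N0: "\<And>x. N x \<ge> 0" and Nadd: "\<And>x y. N (x+y) \<le> N x + N y"
  and Nmult: "\<And>x y. N (x*y) \<le> N x * N y" and Nneg: "\<And>x. N (-x) = N x"
  and N1: "N 1 \<le> 1" and N0': "N 0 = 0"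
  and bnd: "\<And>i j. i < k \<Longrightarrow> j < k \<Longrightarrow> N (A $$ (i,j)) \<le> b i"
  shows "N (det A) \<le> fact k * (\<Prod>i<k. b i)"
proof -
  let ?P = "{p. p permutes {0..<k}}"
  have fin: "finite ?P" by (simp add: finite_permutations)
  have "N (det A) \<le> (\<Sum>p\<in>?P. N (signof p * (\<Prod>i=0..<k. A $$ (i, p i))))"
    unfolding det_def'[OF A] by (rule N_sum_le[OF N0' Nadd fin])
  also have "\<dots> \<le> (\<Sum>p\<in>?P. (\<Prod>i<k. b i))"
  proof (rule sum_mono)
    fix p assume p: "p \<in> ?P"
    have s: "N (signof p * x) = N x" for x
      by (cases p rule: sign_cases) (auto simp: Nneg)
    have "N (\<Prod>i=0..<k. A $$ (i, p i)) \<le> (\<Prod>i=0..<k. N (A $$ (i, p i)))"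
      by (rule N_prod_le[OF N0 N1 Nmult]) simp
    also have "\<dots> \<le> (\<Prod>i=0..<k. b i)"
    proof (rule prod_mono)
      fix i assume i: "i \<in> {0..<k}"
      have "p i < k" using p i permutes_in_image by fastforce
      then show "0 \<le> N (A $$ (i, p i)) \<and> N (A $$ (i, p i)) \<le> b i" using N0 bnd i by auto
    qed
    finally show "N (signof p * (\<Prod>i=0..<k. A $$ (i, p i))) \<le> (\<Prod>i<k. b i)"
      by (simp add: s atLeast0LessThan)
  qed
  also have "\<dots> = fact k * (\<Prod>i<k. b i)"
    using card_permutations[of "{0..<k}" k] by simp
  finally show ?thesis .
qed

lemma det_degree:
  fixes A :: "'a::comm_ring_1 poly mat"
  assumes A: "A \<in> carrier_mat k k"
  and bnd: "\<And>i j. i < k \<Longrightarrow> j < k \<Longrightarrow> degree (A $$ (i,j)) \<le> e"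
  shows "degree (det A) \<le> k * e"
  unfolding det_def'[OF A]
proof (rule degree_sum_le)
  show "finite {p. p permutes {0..<k}}" by (simp add: finite_permutations)
  fix p assume p: "p \<in> {p. p permutes {0..<k}}"
  have s: "degree (signof p * x) = degree x" for x :: "'a poly"
    by (cases p rule: sign_cases) auto
  have "degree (\<Prod>i=0..<k. A $$ (i, p i)) \<le> (\<Sum>i=0..<k. degree (A $$ (i, p i)))"
    using degree_prod_sum_le[of "{0..<k}"] by (simp add: o_def)
  also have "\<dots> \<le> (\<Sum>i=0..<k. e)"
  proof (rule sum_mono)
    fix i assume i: "i \<in> {0..<k}"
    have "p i < k" using p i permutes_in_image by fastforce
    then show "degree (A $$ (i, p i)) \<le> e" using bnd i by auto
  qed
  finally show "degree (signof p * (\<Prod>i=0..<k. A $$ (i, p i))) \<le> k * e" by (simp add: s)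
qed


definition l1 :: "int poly \<Rightarrow> real" where
  "l1 q = (\<Sum>i<Suc (degree q). real_of_int \<bar>coeff q i\<bar>)"

lemma l1_eq: assumes "degree q < n" shows "l1 q = (\<Sum>i<n. real_of_int \<bar>coeff q i\<bar>)"
proof -
  have "(\<Sum>i<n. real_of_int \<bar>coeff q i\<bar>) = (\<Sum>i<Suc (degree q). real_of_int \<bar>coeff q i\<bar>)"
    by (rule sum.mono_neutral_right) (use assms in \<open>auto simp: coeff_eq_0\<close>)
  then show ?thesis by (simp add: l1_def)
qed

lemma l1_nonneg: "l1 q \<ge> 0" by (simp add: l1_def sum_nonneg)

lemma l1_0[simp]: "l1 0 = 0" by (simp add: l1_def)

lemma l1_add: "l1 (a + b) \<le> l1 a + l1 b"
proof -
  define n where "n = Suc (max (degree a) (degree b))"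
  have "degree (a+b) < n" using degree_add_le_max[of a b] unfolding n_def by linarith
  then have "l1 (a+b) = (\<Sum>i<n. real_of_int \<bar>coeff a i + coeff b i\<bar>)" by (simp add: l1_eq)
  also have "\<dots> \<le> (\<Sum>i<n. real_of_int \<bar>coeff a i\<bar> + real_of_int \<bar>coeff b i\<bar>)"
    by (rule sum_mono) simp
  also have "\<dots> = l1 a + l1 b"
  proof -
    have "l1 a = (\<Sum>i<n. real_of_int \<bar>coeff a i\<bar>)" by (rule l1_eq) (simp add: n_def)
    moreover have "l1 b = (\<Sum>i<n. real_of_int \<bar>coeff b i\<bar>)" by (rule l1_eq) (simp add: n_def)
    ultimately show ?thesis by (simp add: sum.distrib)
  qed
  finally show ?thesis .
qed

lemma l1_uminus: "l1 (-a) = l1 a" by (simp add: l1_def)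

lemma l1_smult: "l1 (smult c b) = real_of_int \<bar>c\<bar> * l1 b"
proof -
  have "degree (smult c b) < Suc (degree b)" using degree_smult_le[of c b] by simp
  then have "l1 (smult c b) = (\<Sum>i<Suc (degree b). real_of_int \<bar>coeff (smult c b) i\<bar>)" by (rule l1_eq)
  then show ?thesis by (simp add: l1_def sum_distrib_left abs_mult del: sum.lessThan_Suc)
qed

lemma l1_pCons: "l1 (pCons c p) = real_of_int \<bar>c\<bar> + l1 p"
proof -
  have "degree (pCons c p) < Suc (Suc (degree p))" by (simp add: degree_pCons_le le_imp_less_Suc)
  then have "l1 (pCons c p) = (\<Sum>i<Suc (Suc (degree p)). real_of_int \<bar>coeff (pCons c p) i\<bar>)"
    by (rule l1_eq)
  also have "\<dots> = real_of_int \<bar>c\<bar> + (\<Sum>i<Suc (degree p). real_of_int \<bar>coeff p i\<bar>)"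
    by (subst sum.lessThan_Suc_shift) simp
  finally show ?thesis by (simp add: l1_def)
qed

lemma l1_mult: "l1 (a * b) \<le> l1 a * l1 b"
proof (induction a rule: pCons_induct)
  case 0 then show ?case by simp
next
  case (pCons c a)
  have "l1 (pCons c a * b) = l1 (smult c b + pCons 0 (a * b))" by simp
  also have "\<dots> \<le> real_of_int \<bar>c\<bar> * l1 b + l1 (a*b)"
    using l1_add[of "smult c b" "pCons 0 (a*b)"] by (simp add: l1_smult l1_pCons)
  also have "\<dots> \<le> real_of_int \<bar>c\<bar> * l1 b + l1 a * l1 b" using pCons by simp
  also have "\<dots> = l1 (pCons c a) * l1 b" by (simp add: l1_pCons algebra_simps)
  finally show ?case .
qed

lemma l1_1: "l1 1 \<le> 1" by (simp add: l1_def)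

lemma coeff_le_l1: "real_of_int \<bar>coeff q i\<bar> \<le> l1 q"
proof (cases "i \<le> degree q")
  case True
  then show ?thesis unfolding l1_def
    by (intro member_le_sum) auto
next
  case False then show ?thesis by (simp add: coeff_eq_0 l1_nonneg)
qed

lemma l1_le: assumes "degree q \<le> e" "\<And>i. real_of_int \<bar>coeff q i\<bar> \<le> B"
  shows "l1 q \<le> real (Suc e) * B"
proof -
  have "l1 q = (\<Sum>i<Suc e. real_of_int \<bar>coeff q i\<bar>)" using assms by (intro l1_eq) simp
  also have "\<dots> \<le> (\<Sum>i<Suc e. B)" by (rule sum_mono) (use assms in auto)
  finally show ?thesis by simp
qed

lemma det_bound_poly:
  fixes A :: "int poly mat"
  assumes A: "A \<in> carrier_mat k k"
  and bnd: "\<And>i j. i < k \<Longrightarrow> j < k \<Longrightarrow> l1 (A $$ (i,j)) \<le> b i"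
  shows "l1 (det A) \<le> fact k * (\<Prod>i<k. b i)"
  by (rule det_bound[OF A l1_nonneg l1_add l1_mult l1_uminus l1_1 l1_0 bnd])

lemma det_bound_int:
  fixes A :: "int mat"
  assumes A: "A \<in> carrier_mat k k"
  and bnd: "\<And>i j. i < k \<Longrightarrow> j < k \<Longrightarrow> real_of_int \<bar>A $$ (i,j)\<bar> \<le> b i"
  shows "real_of_int \<bar>det A\<bar> \<le> fact k * (\<Prod>i<k. b i)"
  by (rule det_bound[where N="\<lambda>x. real_of_int \<bar>x\<bar>", OF A]) (auto simp: abs_mult dest: bnd)


lemma norm_inf1_ge: "\<bar>coeff q j\<bar> \<le> norm_inf1 q"
proof (cases "j \<le> degree q")
  case True then show ?thesis unfolding norm_inf1_def by (intro Max_ge) auto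
next
  case False
  have "\<bar>coeff q 0\<bar> \<le> norm_inf1 q" unfolding norm_inf1_def by (intro Max_ge) auto
  then show ?thesis using False by (simp add: coeff_eq_0)
qed

lemma norm_inf2_ge: "\<bar>coeff (coeff P i) j\<bar> \<le> norm_inf2 P"
proof (cases "i \<le> degree P")
  case True
  have "norm_inf1 (coeff P i) \<le> norm_inf2 P" unfolding norm_inf2_def using True by (intro Max_ge) auto
  then show ?thesis using norm_inf1_ge order.trans by blast
next
  case False
  have "norm_inf1 (coeff P 0) \<le> norm_inf2 P" unfolding norm_inf2_def by (intro Max_ge) auto
  then show ?thesis using False norm_inf1_ge[of "coeff P 0" 0]
    by (simp add: coeff_eq_0)
qed

lemma degree_y_ge: "degree (coeff P i) \<le> degree_y P"
proof (cases "i \<le> degree P")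
  case True then show ?thesis unfolding degree_y_def by (intro Max_ge) auto
next
  case False then show ?thesis by (simp add: coeff_eq_0)
qed

lemma prod_if_split:
  assumes "dx \<le> k"
  shows "(\<Prod>i<k. (if i < dx then B else F :: real)) = B ^ dx * F ^ (k - dx)"
proof -
  have "(\<Prod>i<k. (if i < dx then B else F)) = (\<Prod>i\<in>{..<k} \<inter> {i. i < dx}. B) * (\<Prod>i\<in>{..<k} \<inter> - {i. i < dx}. F)"
    by (rule prod.If_cases) simp
  also have "{..<k} \<inter> {i. i < dx} = {..<dx}" using assms by auto
  also have "{..<k} \<inter> - {i. i < dx} = {dx..<k}" by auto
  finally show ?thesis by simp
qed

lemma res1_bounds:
  fixes P f :: "int poly poly"
  assumes ey: "degree_y P \<le> e" "degree_y f \<le> e"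
  defines "R \<equiv> resultant P f"
  shows "degree R \<le> (degree P + degree f) * e"
    and "l1 R \<le> fact (degree P + degree f) * (real (Suc e) * of_int (norm_inf2 P)) ^ degree f
             * (real (Suc e) * of_int (norm_inf2 f)) ^ degree P"
proof -
  let ?k = "degree P + degree f"
  have A: "sylvester_mat P f \<in> carrier_mat ?k ?k" by (rule sylvester_carrier_mat)
  have ent: "sylvester_mat P f $$ (i,j) = 0 \<or> (i < degree f \<and> (\<exists>a. sylvester_mat P f $$ (i,j) = coeff P a))
     \<or> (\<not> i < degree f \<and> (\<exists>a. sylvester_mat P f $$ (i,j) = coeff f a))" if "i < ?k" "j < ?k" for i j
    using that by (auto simp: sylvester_index_mat)
  show "degree R \<le> (degree P + degree f) * e"
    unfolding R_def resultant_def
  proof (rule det_degree[OF A])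
    fix i j assume "i < ?k" "j < ?k"
    from ent[OF this] show "degree (sylvester_mat P f $$ (i, j)) \<le> e"
      using degree_y_ge[of P] degree_y_ge[of f] ey by (metis degree_0 le_0_eq le_trans zero_le)
  qed
  define b where "b i = real (Suc e) * (if i < degree f then of_int (norm_inf2 P) else of_int (norm_inf2 f))" for i
  have "l1 R \<le> fact ?k * (\<Prod>i<?k. b i)"
    unfolding R_def resultant_def
  proof (rule det_bound_poly[OF A])
    fix i j assume ij: "i < ?k" "j < ?k"
    have lP: "l1 (coeff P a) \<le> real (Suc e) * of_int (norm_inf2 P)" for a
      by (rule l1_le) (use degree_y_ge[of P a] ey norm_inf2_ge[of P a] in \<open>auto simp flip: of_int_abs\<close>)
    have lf: "l1 (coeff f a) \<le> real (Suc e) * of_int (norm_inf2 f)" for a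
      by (rule l1_le) (use degree_y_ge[of f a] ey norm_inf2_ge[of f a] in \<open>auto simp flip: of_int_abs\<close>)
    have n0: "0 \<le> norm_inf2 P" "0 \<le> norm_inf2 f"
      using norm_inf2_ge[of P 0 0] norm_inf2_ge[of f 0 0] by auto
    from ent[OF ij] show "l1 (sylvester_mat P f $$ (i, j)) \<le> b i"
      unfolding b_def using lP lf n0 by auto
  qed
  also have "(\<Prod>i<?k. b i) = real (Suc e) ^ ?k * (\<Prod>i<?k. (if i < degree f then of_int (norm_inf2 P) else of_int (norm_inf2 f)))"
    unfolding b_def by (simp add: prod.distrib)
  also have "(\<Prod>i<?k. (if i < degree f then of_int (norm_inf2 P) else of_int (norm_inf2 f) :: real))
     = of_int (norm_inf2 P) ^ degree f * of_int (norm_inf2 f) ^ degree P"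
    by (subst prod_if_split) auto
  finally show "l1 R \<le> fact (degree P + degree f) * (real (Suc e) * of_int (norm_inf2 P)) ^ degree f
             * (real (Suc e) * of_int (norm_inf2 f)) ^ degree P"
    by (simp add: power_mult_distrib power_add mult_ac)
qed

lemma res2_bound:
  fixes R h :: "int poly"
  assumes "degree h = n" "\<And>j. real_of_int \<bar>coeff h j\<bar> \<le> Hh" "1 \<le> Hh"
  shows "real_of_int \<bar>resultant R h\<bar> \<le> fact (degree R + n) * l1 R ^ n * Hh ^ degree R"
proof -
  let ?k = "degree R + degree h"
  have A: "sylvester_mat R h \<in> carrier_mat ?k ?k" by (rule sylvester_carrier_mat)
  define b where "b i = (if i < degree h then l1 R else Hh)" for i
  have "real_of_int \<bar>resultant R h\<bar> \<le> fact ?k * (\<Prod>i<?k. b i)"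
    unfolding resultant_def
  proof (rule det_bound_int[OF A])
    fix i j assume ij: "i < ?k" "j < ?k"
    show "real_of_int \<bar>sylvester_mat R h $$ (i, j)\<bar> \<le> b i"
      using ij assms(2,3) coeff_le_l1[of R] l1_nonneg[of R]
      by (auto simp: sylvester_index_mat b_def)
  qed
  also have "(\<Prod>i<?k. b i) = l1 R ^ n * Hh ^ degree R"
    unfolding b_def by (subst prod_if_split) (auto simp: assms)
  finally show ?thesis using assms by simp
qed


theorem mainTheorem4:
  fixes n1 m dx :: nat and H :: int
  shows "\<exists>K::real. K > 0 \<and>
    (\<forall>(p::nat) (n2::nat) (d::nat) (h::int poly) (f::int poly poly) (P::int poly poly).
      prime p \<longrightarrow> d dvd n1 * n2 \<longrightarrow> 1 < d \<longrightarrow> d < n1 * n2 \<longrightarrow>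
      lead_coeff h = 1 \<longrightarrow> degree h = n1 \<longrightarrow> norm_inf1 h = H \<longrightarrow>
      lead_coeff f = 1 \<longrightarrow> degree f = dx \<longrightarrow> degree_y f \<le> n1 - 1 \<longrightarrow>
      degree P \<le> m \<longrightarrow> degree_y P \<le> n1 - 1 \<longrightarrow>
      real_of_int (norm_inf2 P) \<le>
        2 powr ((real (n1 * (m + 1)) - 1) / 4) *
        real p powr ((real (n1 * n2) - real d) / real (n1 * (m + 1))) \<longrightarrow>
      real_of_int \<bar>resultant (resultant P f) h\<bar> \<le>
        K * real (p ^ (n1 * n2)) powr ((1 - real d / real (n1 * n2)) * real dx / real (m + 1))
          * real_of_int (norm_inf2 f) ^ (n1 * m))"
proof -
  define e where "e = n1 - 1"
  define D where "D = (m + dx) * e"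
  define Hh where "Hh = max 1 (real_of_int H)"
  define a where "a = (real (n1 * (m + 1)) - 1) / 4"
  define C where "C = fact (m + dx) * real n1 ^ (m + dx)"
  define K where "K = fact (D + n1) * Hh ^ D * C ^ n1 * (2 powr a) ^ (dx * n1)"
  have Hh1: "1 \<le> Hh" by (simp add: Hh_def)
  have "K > 0" unfolding K_def C_def using Hh1 by (cases "n1 = 0") auto
  moreover have "real_of_int \<bar>resultant (resultant P f) h\<bar> \<le>
        K * real (p ^ (n1 * n2)) powr ((1 - real d / real (n1 * n2)) * real dx / real (m + 1))
          * real_of_int (norm_inf2 f) ^ (n1 * m)"
    if pr: "prime p" and d1: "1 < d" and dn: "d < n1 * n2"
      and h1: "lead_coeff h = 1" and hdeg: "degree h = n1" and hH: "norm_inf1 h = H"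
      and f1: "lead_coeff f = 1" and fdeg: "degree f = dx" and fy: "degree_y f \<le> n1 - 1"
      and Pdeg: "degree P \<le> m" and Py: "degree_y P \<le> n1 - 1"
      and Pn: "real_of_int (norm_inf2 P) \<le> 2 powr a *
        real p powr ((real (n1 * n2) - real d) / real (n1 * (m + 1)))"
    for p n2 d h f P
  proof -
    have n1: "n1 \<ge> 1" using d1 dn by (cases n1) auto
    have n2: "n2 \<ge> 1" using d1 dn by (cases n2) auto
    have p1: "real p > 1" using pr prime_gt_1_nat by auto
    have Sue: "real (Suc e) = real n1" using n1 e_def by simp
    have Sue': "1 + real e = real n1" using n1 e_def by simp
    define B where "B = real_of_int (norm_inf2 P)"
    define F where "F = real_of_int (norm_inf2 f)"
    define R where "R = resultant P f"
    have B0: "B \<ge> 0" unfolding B_def using norm_inf2_ge[of P 0 0] by simp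
    have F1: "F \<ge> 1"
    proof -
      have "coeff (coeff f dx) 0 = 1" using f1 fdeg by simp
      then show ?thesis unfolding F_def using norm_inf2_ge[of f dx 0] by simp
    qed
    have Rdeg: "degree R \<le> D"
    proof -
      have "degree R \<le> (degree P + degree f) * e"
        unfolding R_def by (rule res1_bounds(1)) (use fy Py e_def in auto)
      also have "\<dots> \<le> D" unfolding D_def using Pdeg fdeg by simp
      finally show ?thesis .
    qed
    have Rl1: "l1 R \<le> C * B ^ dx * F ^ m"
    proof -
      have "l1 R \<le> fact (degree P + degree f) * (real (Suc e) * B) ^ degree f
             * (real (Suc e) * F) ^ degree P"
        unfolding R_def B_def F_def by (rule res1_bounds(2)) (use fy Py e_def in auto)
      also have "\<dots> = fact (degree P + dx) * (real n1 ^ (dx + degree P)) * B ^ dx * F ^ degree P"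
        by (simp add: Sue Sue' fdeg power_mult_distrib power_add mult_ac)
      also have "\<dots> \<le> fact (m + dx) * (real n1 ^ (m + dx)) * B ^ dx * F ^ m"
      proof -
        have "fact (degree P + dx) \<le> (fact (m + dx) :: real)"
          using Pdeg by (intro fact_mono) simp
        moreover have "real n1 ^ (dx + degree P) \<le> real n1 ^ (m + dx)"
          using n1 Pdeg by (intro power_increasing) auto
        moreover have "F ^ degree P \<le> F ^ m" using F1 Pdeg by (intro power_increasing) auto
        ultimately have "fact (degree P + dx) * (real n1 ^ (dx + degree P)) \<le> fact (m + dx) * (real n1 ^ (m + dx))"
          by (intro mult_mono) auto
        then have "fact (degree P + dx) * (real n1 ^ (dx + degree P)) * B ^ dx \<le> fact (m + dx) * (real n1 ^ (m + dx)) * B ^ dx"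
          using B0 by (intro mult_right_mono) auto
        from mult_mono[OF this \<open>F ^ degree P \<le> F ^ m\<close>] show ?thesis using F1 B0
          by auto
      qed
      finally show ?thesis unfolding C_def .
    qed
    have Hb: "real_of_int \<bar>coeff h j\<bar> \<le> Hh" for j
      using norm_inf1_ge[of h j] hH unfolding Hh_def by linarith
    have "real_of_int \<bar>resultant R h\<bar> \<le> fact (degree R + n1) * l1 R ^ n1 * Hh ^ degree R"
      by (rule res2_bound[OF hdeg Hb Hh1])
    also have "\<dots> \<le> fact (D + n1) * (C * B ^ dx * F ^ m) ^ n1 * Hh ^ D"
    proof -
      have "fact (degree R + n1) \<le> (fact (D + n1) :: real)" using Rdeg by (intro fact_mono) simp
      moreover have "l1 R ^ n1 \<le> (C * B ^ dx * F ^ m) ^ n1"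
        using Rl1 l1_nonneg by (intro power_mono) auto
      moreover have "Hh ^ degree R \<le> Hh ^ D" using Hh1 Rdeg by (intro power_increasing) auto
      moreover have "C \<ge> 0" unfolding C_def by simp
      ultimately have "fact (degree R + n1) * l1 R ^ n1 \<le> fact (D + n1) * (C * B ^ dx * F ^ m) ^ n1"
        using l1_nonneg B0 F1 by (intro mult_mono) auto
      from mult_mono[OF this \<open>Hh ^ degree R \<le> Hh ^ D\<close>] show ?thesis
        using l1_nonneg Hh1 B0 F1 \<open>C \<ge> 0\<close> by auto
    qed
    also have "\<dots> = fact (D + n1) * Hh ^ D * C ^ n1 * B ^ (dx * n1) * F ^ (n1 * m)"
      by (simp add: power_mult_distrib power_mult[symmetric] mult_ac)
    also have "\<dots> \<le> fact (D + n1) * Hh ^ D * C ^ n1 * ((2 powr a) ^ (dx * n1) *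
        real p powr ((real (n1 * n2) - real d) * real dx / real (m + 1))) * F ^ (n1 * m)"
    proof -
      define b where "b = (real (n1 * n2) - real d) / real (n1 * (m + 1))"
      have "B ^ (dx * n1) \<le> (2 powr a * real p powr b) ^ (dx * n1)"
        using Pn B0 unfolding B_def b_def by (intro power_mono) auto
      also have "\<dots> = (2 powr a) ^ (dx * n1) * (real p powr b) ^ (dx * n1)"
        by (simp add: power_mult_distrib)
      also have "(real p powr b) ^ (dx * n1) = real p powr (b * real (dx * n1))"
        using p1 by (simp add: powr_realpow[symmetric] powr_powr)
      also have "b * real (dx * n1) = (real (n1 * n2) - real d) * real dx / real (m + 1)"
      proof -
        have "b * real (dx * n1) = (real (n1 * n2) - real d) * real dx * (real n1 / real (n1 * (m + 1)))"
          unfolding b_def by (simp add: mult_ac)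
        also have "real n1 / real (n1 * (m + 1)) = 1 / real (m + 1)"
          unfolding of_nat_mult by (rule nonzero_divide_mult_cancel_left) (use n1 in auto)
        finally show ?thesis by simp
      qed
      finally have "B ^ (dx * n1) \<le> (2 powr a) ^ (dx * n1) *
        real p powr ((real (n1 * n2) - real d) * real dx / real (m + 1))" .
      then show ?thesis using F1 Hh1 unfolding C_def
        by (intro mult_mono mult_left_mono) (auto intro!: mult_nonneg_nonneg)
    qed
    also have "real p powr ((real (n1 * n2) - real d) * real dx / real (m + 1)) =
       real (p ^ (n1 * n2)) powr ((1 - real d / real (n1 * n2)) * real dx / real (m + 1))"
    proof -
      have e1: "real (p ^ (n1 * n2)) = real p powr real (n1 * n2)"
        using p1 powr_realpow[of "real p" "n1 * n2"] by simp
      moreover have e2: "real (n1 * n2) * ((1 - real d / real (n1 * n2)) * real dx / real (m + 1))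
          = (real (n1 * n2) - real d) * real dx / real (m + 1)"
      proof -
        have Np: "real (n1 * n2) > 0" using n1 n2 by simp
        have "real (n1 * n2) * (1 - real d / real (n1 * n2)) = real (n1 * n2) - real d"
          using n1 n2 by (simp add: right_diff_distrib)
        then show ?thesis by (metis mult.assoc times_divide_eq_right)
      qed
      show ?thesis unfolding e1 powr_powr e2 ..
    qed
    finally show ?thesis unfolding R_def F_def K_def by (simp add: mult_ac)
  qed
  ultimately show ?thesis unfolding a_def by blast
qed

end
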